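(* Let $S$ be a finite poset whose Hasse graph $\Gamma(S)$ is one of the Dynkin graphs $D_n$ ($n\ge4$), $E_6$, $E_7$, $E_8$ or the extended Dynkin graphs $\widetilde E_6$, $\widetilde E_7$, $\widetilde E_8$. Then $S$ contains a terminal point which is a Dynkin point.
   Context: For $S=\{s_1,\dots,s_n\}$, $f_S(x)=\sum_i x_i^2+\sum_{s_i<s_j}x_ix_j$, so $\frac{\partial f_S}{\partial x_m}(x)=2x_m+\sum_{j\ne m,\ s_j\text{ comparable with }s_m}x_j$. The Hasse graph $\Gamma(S)$ has vertices $S$ and an edge between $s,s'$ when one covers the other. A terminal point is a vertex of degree $\le1$ in $\Gamma(S)$. A point $s_m$ is a Dynkin point if there is a nonzero integer vector $d\in\mathbb Z^n$ with $0\le\frac{\partial f_S}{\partial x_m}(d)\le 2$ and $\frac{\partial f_S}{\partial x_j}(d)=0$ for all $j\ne m$. *)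

theory Defs
  imports Main
begin

text \<open>A finite poset is modelled as a finite set S inside a type with a partial order
  (the induced order on S). Vectors x in Z^S are functions 'a => int (values off S are irrelevant).\<close>

definition comparable :: "'a::order \<Rightarrow> 'a \<Rightarrow> bool" where
  "comparable s t \<longleftrightarrow> s < t \<or> t < s"

definition fS :: "'a::order set \<Rightarrow> ('a \<Rightarrow> int) \<Rightarrow> int" where
  "fS S x = (\<Sum>i\<in>S. (x i)^2) + (\<Sum>p\<in>{(i,j). i \<in> S \<and> j \<in> S \<and> i < j}. x (fst p) * x (snd p))"

definition dfS :: "'a::order set \<Rightarrow> ('a \<Rightarrow> int) \<Rightarrow> 'a \<Rightarrow> int" where
  "dfS S x m = 2 * x m + (\<Sum>j\<in>{j\<in>S. j \<noteq> m \<and> comparable j m}. x j)"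

definition covers :: "'a::order set \<Rightarrow> 'a \<Rightarrow> 'a \<Rightarrow> bool" where
  "covers S s t \<longleftrightarrow> s \<in> S \<and> t \<in> S \<and> s < t \<and> \<not> (\<exists>u\<in>S. s < u \<and> u < t)"

definition hasse_adj :: "'a::order set \<Rightarrow> 'a \<Rightarrow> 'a \<Rightarrow> bool" where
  "hasse_adj S s t \<longleftrightarrow> covers S s t \<or> covers S t s"

definition hasse_degree :: "'a::order set \<Rightarrow> 'a \<Rightarrow> nat" where
  "hasse_degree S s = card {t\<in>S. hasse_adj S s t}"

definition terminal_point :: "'a::order set \<Rightarrow> 'a \<Rightarrow> bool" where
  "terminal_point S s \<longleftrightarrow> s \<in> S \<and> hasse_degree S s \<le> 1"

definition dynkin_point :: "'a::order set \<Rightarrow> 'a \<Rightarrow> bool" where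
  "dynkin_point S m \<longleftrightarrow> m \<in> S \<and>
     (\<exists>d :: 'a \<Rightarrow> int. (\<exists>i\<in>S. d i \<noteq> 0) \<and> 0 \<le> dfS S d m \<and> dfS S d m \<le> 2 \<and>
        (\<forall>j\<in>S. j \<noteq> m \<longrightarrow> dfS S d j = 0))"

text \<open>Graphs on the vertex set {0..<N}, given by an edge set of pairs (read undirected).\<close>
definition path_edges :: "nat \<Rightarrow> (nat \<times> nat) set" where
  "path_edges k = {(i, i+1) | i. i + 1 < k}"

definition D_graph :: "nat \<Rightarrow> nat \<times> (nat \<times> nat) set" where
  "D_graph n = (n, path_edges (n - 1) \<union> {(n - 3, n - 1)})"

definition E_graph :: "nat \<Rightarrow> nat \<times> (nat \<times> nat) set" where
  "E_graph n = (n, path_edges (n - 1) \<union> {(2, n - 1)})"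

text \<open>Extended Dynkin graphs: star trees with arms (2,2,2), (3,3,1), (5,2,1).\<close>
definition E6_ext :: "nat \<times> (nat \<times> nat) set" where
  "E6_ext = (7, path_edges 5 \<union> {(2,5), (5,6)})"
definition E7_ext :: "nat \<times> (nat \<times> nat) set" where
  "E7_ext = (8, path_edges 7 \<union> {(3,7)})"
definition E8_ext :: "nat \<times> (nat \<times> nat) set" where
  "E8_ext = (9, path_edges 8 \<union> {(2,8)})"

definition graph_adj :: "(nat \<times> nat) set \<Rightarrow> nat \<Rightarrow> nat \<Rightarrow> bool" where
  "graph_adj E i j \<longleftrightarrow> (i, j) \<in> E \<or> (j, i) \<in> E"

definition hasse_iso :: "'a::order set \<Rightarrow> nat \<times> (nat \<times> nat) set \<Rightarrow> bool" where
  "hasse_iso S G \<longleftrightarrow> (\<exists>\<phi>. bij_betw \<phi> S {..<fst G} \<and>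
      (\<forall>x\<in>S. \<forall>y\<in>S. hasse_adj S x y \<longleftrightarrow> graph_adj (snd G) (\<phi> x) (\<phi> y)))"

end

theory Submission
  imports Defs
begin

lemma cover_above:
  assumes "finite S" "x \<in> S" "y \<in> S" "x < y"
  shows "\<exists>w\<in>S. covers S x w \<and> w \<le> y"
proof -
  have "y \<in> {z\<in>S. x < z \<and> z \<le> y}" using assms by auto
  hence ne: "{z\<in>S. x < z \<and> z \<le> y} \<noteq> {}" by blast
  have fa: "finite {z\<in>S. x < z \<and> z \<le> y}" using assms(1) by simp
  obtain w where w: "w \<in> {z\<in>S. x < z \<and> z \<le> y}"
    and mn: "\<forall>b\<in>{z\<in>S. x < z \<and> z \<le> y}. b \<le> w \<longrightarrow> w = b"
    using finite_has_minimal[OF fa ne] by blast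
  have "covers S x w" unfolding covers_def
  proof (intro conjI)
    show "\<not> (\<exists>u\<in>S. x < u \<and> u < w)"
    proof
      assume "\<exists>u\<in>S. x < u \<and> u < w"
      then obtain u where "u \<in> S" "x < u" "u < w" by blast
      moreover have "u \<le> y" using w \<open>u < w\<close> by auto
      ultimately have "u \<in> {z\<in>S. x < z \<and> z \<le> y}" by simp
      hence "w = u" using mn \<open>u < w\<close> by auto
      thus False using \<open>u < w\<close> by simp
    qed
  qed (use w assms in simp_all)
  thus ?thesis using w by blast
qed

lemma cover_below:
  assumes "finite S" "x \<in> S" "y \<in> S" "x < y"
  shows "\<exists>w\<in>S. covers S w y \<and> x \<le> w"
proof -
  have "x \<in> {z\<in>S. x \<le> z \<and> z < y}" using assms by auto
  hence ne: "{z\<in>S. x \<le> z \<and> z < y} \<noteq> {}" by blast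
  have fa: "finite {z\<in>S. x \<le> z \<and> z < y}" using assms(1) by simp
  obtain w where w: "w \<in> {z\<in>S. x \<le> z \<and> z < y}"
    and mx: "\<forall>b\<in>{z\<in>S. x \<le> z \<and> z < y}. w \<le> b \<longrightarrow> w = b"
    using finite_has_maximal[OF fa ne] by blast
  have "covers S w y" unfolding covers_def
  proof (intro conjI)
    show "\<not> (\<exists>u\<in>S. w < u \<and> u < y)"
    proof
      assume "\<exists>u\<in>S. w < u \<and> u < y"
      then obtain u where "u \<in> S" "w < u" "u < y" by blast
      moreover have "x \<le> u" using w \<open>w < u\<close> by auto
      ultimately have "u \<in> {z\<in>S. x \<le> z \<and> z < y}" by simp
      hence "w = u" using mx \<open>w < u\<close> by auto
      thus False using \<open>w < u\<close> by simp
    qed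
  qed (use w assms in simp_all)
  thus ?thesis using w by blast
qed

definition sol :: "'a::order set \<Rightarrow> 'a \<Rightarrow> int \<Rightarrow> int \<Rightarrow> bool" where
  "sol S m c \<delta> \<longleftrightarrow> (\<exists>d. (\<exists>i\<in>S. d i \<noteq> 0) \<and> dfS S d m = c \<and> d m = \<delta> \<and> (\<forall>j\<in>S. j \<noteq> m \<longrightarrow> dfS S d j = 0))"

lemma comparable_sym: "comparable a b \<longleftrightarrow> comparable b a"
  unfolding comparable_def by auto

lemma comparable_irrefl[simp]: "\<not> comparable a a"
  unfolding comparable_def by auto

lemma sum_split_leaf:
  assumes "finite S" "lf \<in> S" "v \<in> S" "v \<noteq> lf"
  shows "(\<Sum>j\<in>{j\<in>S. j \<noteq> v \<and> comparable j v}. d j) =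
         (\<Sum>j\<in>{j\<in>S-{lf}. j \<noteq> v \<and> comparable j v}. d j) + (if comparable lf v then d lf else 0)"
proof (cases "comparable lf v")
  case True
  have "{j\<in>S. j \<noteq> v \<and> comparable j v} = insert lf {j\<in>S-{lf}. j \<noteq> v \<and> comparable j v}"
    using True assms by auto
  thus ?thesis using True assms(1) by (simp add: add.commute)
next
  case False
  have "{j\<in>S. j \<noteq> v \<and> comparable j v} = {j\<in>S-{lf}. j \<noteq> v \<and> comparable j v}"
    using False assms by auto
  thus ?thesis using False by simp
qed

lemma dfS_leaf:
  assumes "finite S" "lf \<in> S" "v \<in> S" "v \<noteq> lf"
  shows "dfS S d v = dfS (S-{lf}) d v + (if comparable lf v then d lf else 0)"
  using sum_split_leaf[OF assms, of d] unfolding dfS_def by simp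

lemma dfS_cong:
  assumes "\<forall>j\<in>S. d j = d' j" "v \<in> S"
  shows "dfS S d v = dfS S d' v"
  unfolding dfS_def using assms by (auto intro!: sum.cong)

lemma grow_turn:
  assumes fin: "finite S" and l: "lf \<in> S" and p: "p \<in> S" "p \<noteq> lf"
    and cmp: "\<forall>v\<in>S-{lf}. comparable lf v \<longleftrightarrow> v = p"
    and s: "sol (S-{lf}) p c \<delta>"
  shows "sol S lf (2*c - \<delta>) c"
proof -
  obtain d' where nz: "\<exists>i\<in>S-{lf}. d' i \<noteq> 0" and dp: "dfS (S-{lf}) d' p = c" and dd: "d' p = \<delta>"
    and z: "\<forall>j\<in>S-{lf}. j \<noteq> p \<longrightarrow> dfS (S-{lf}) d' j = 0"
    using s unfolding sol_def by blast
  define d where "d x = (if x = lf then c else - d' x)" for x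
  have neg: "dfS (S-{lf}) d v = - dfS (S-{lf}) d' v" if "v \<in> S-{lf}" for v
  proof -
    have "dfS (S-{lf}) d v = dfS (S-{lf}) (\<lambda>x. - d' x) v"
      by (rule dfS_cong) (use that in \<open>auto simp: d_def\<close>)
    also have "\<dots> = - dfS (S-{lf}) d' v" unfolding dfS_def by (simp add: sum_negf)
    finally show ?thesis .
  qed
  have cs: "{j\<in>S. j \<noteq> lf \<and> comparable j lf} = {p}"
    using cmp p by (auto simp: comparable_sym)
  have "dfS S d lf = 2*c - \<delta>" unfolding dfS_def cs using dd p by (simp add: d_def)
  moreover have "dfS S d j = 0" if "j \<in> S" "j \<noteq> lf" for j
  proof -
    have "dfS S d j = - dfS (S-{lf}) d' j + (if comparable lf j then c else 0)"
      using dfS_leaf[OF fin l that, of d] neg[of j] that by (simp add: d_def)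
    thus ?thesis using cmp that z dp by auto
  qed
  moreover have "\<exists>i\<in>S. d i \<noteq> 0"
  proof (cases "c = 0")
    case True
    then obtain i where "i \<in> S-{lf}" "d' i \<noteq> 0" using nz by blast
    thus ?thesis by (intro bexI[of _ i]) (auto simp: d_def)
  next
    case False thus ?thesis using l by (intro bexI[of _ lf]) (auto simp: d_def)
  qed
  moreover have "d lf = c" by (simp add: d_def)
  ultimately show ?thesis unfolding sol_def by blast
qed

lemma grow_straight:
  assumes fin: "finite S" and l: "lf \<in> S" and p: "p \<in> S" "p \<noteq> lf"
    and cmp: "\<forall>v\<in>S-{lf}. comparable lf v \<longleftrightarrow> (v = p \<or> comparable p v)"
    and s: "sol (S-{lf}) p c \<delta>"
  shows "sol S lf (2*c - \<delta>) c"
proof -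
  obtain d' where nz: "\<exists>i\<in>S-{lf}. d' i \<noteq> 0" and dp: "dfS (S-{lf}) d' p = c" and dd: "d' p = \<delta>"
    and z: "\<forall>j\<in>S-{lf}. j \<noteq> p \<longrightarrow> dfS (S-{lf}) d' j = 0"
    using s unfolding sol_def by blast
  define d where "d x = (if x = lf then c else if x = p then d' p - c else d' x)" for x
  have fin': "finite (S-{lf})" using fin by simp
  have cs: "{j\<in>S. j \<noteq> lf \<and> comparable j lf} = insert p {j\<in>S-{lf}. j \<noteq> p \<and> comparable j p}"
    using cmp p by (auto simp: comparable_sym)
  have sd: "(\<Sum>j\<in>{j\<in>S-{lf}. j \<noteq> v \<and> comparable j v}. d j) =
      (\<Sum>j\<in>{j\<in>S-{lf}. j \<noteq> v \<and> comparable j v}. d' j) - (if comparable p v then c else 0)"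
    if "v \<in> S-{lf}" for v
  proof -
    let ?A = "{j\<in>S-{lf}. j \<noteq> v \<and> comparable j v}"
    have "(\<Sum>j\<in>?A. d j) = (\<Sum>j\<in>?A. d' j - (if j = p then c else 0))"
      by (rule sum.cong) (auto simp: d_def)
    also have "\<dots> = (\<Sum>j\<in>?A. d' j) - (\<Sum>j\<in>?A. (if j = p then c else 0))"
      by (simp add: sum_subtractf)
    also have "(\<Sum>j\<in>?A. (if j = p then c else 0)) = (if p \<in> ?A then c else 0)"
      using fin' by (simp add: sum.delta)
    also have "(p \<in> ?A) = (p \<noteq> v \<and> comparable p v)" using p by auto
    also have "(p \<noteq> v \<and> comparable p v) = comparable p v" by (auto simp: comparable_def)
    finally show ?thesis .
  qed
  have "dfS S d lf = 2*c + (d p + (\<Sum>j\<in>{j\<in>S-{lf}. j \<noteq> p \<and> comparable j p}. d j))"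
    unfolding dfS_def cs using fin p by (simp add: d_def)
  also have "(\<Sum>j\<in>{j\<in>S-{lf}. j \<noteq> p \<and> comparable j p}. d j) = (\<Sum>j\<in>{j\<in>S-{lf}. j \<noteq> p \<and> comparable j p}. d' j)"
    using sd[of p] p by simp
  also have "\<dots> = c - 2*\<delta>" using dp dd unfolding dfS_def by simp
  finally have e0: "dfS S d lf = 2*c + (d p + (c - 2*\<delta>))" .
  have "d p = \<delta> - c" using dd p by (simp add: d_def)
  hence e1: "dfS S d lf = 2*c - \<delta>" using e0 by simp
  moreover have "dfS S d j = 0" if "j \<in> S" "j \<noteq> lf" for j
  proof -
    have j': "j \<in> S-{lf}" using that by simp
    have A: "dfS S d j = dfS (S-{lf}) d j + (if comparable lf j then c else 0)"
      using dfS_leaf[OF fin l that, of d] by (simp add: d_def)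
    have B: "dfS (S-{lf}) d j = 2 * d j + (\<Sum>j'\<in>{j'\<in>S-{lf}. j' \<noteq> j \<and> comparable j' j}. d' j') - (if comparable p j then c else 0)"
      using sd[OF j'] unfolding dfS_def by simp
    have C: "dfS (S-{lf}) d' j = 2 * d' j + (\<Sum>j'\<in>{j'\<in>S-{lf}. j' \<noteq> j \<and> comparable j' j}. d' j')"
      unfolding dfS_def by simp
    show ?thesis
    proof (cases "j = p")
      case True
      have "d j = \<delta> - c" using True dd p by (simp add: d_def)
      moreover have "comparable lf j" using cmp j' True by blast
      moreover have "\<not> comparable p j" using True by simp
      ultimately show ?thesis using A B C dp dd True by simp
    next
      case False
      have "d j = d' j" using False that by (simp add: d_def)
      moreover have "comparable lf j = comparable p j" using cmp j' False by blast
      moreover have "dfS (S-{lf}) d' j = 0" using z j' False by blast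
      ultimately show ?thesis using A B C by simp
    qed
  qed
  moreover have "\<exists>i\<in>S. d i \<noteq> 0"
  proof (cases "c = 0")
    case True
    then obtain i where "i \<in> S-{lf}" "d' i \<noteq> 0" using nz by blast
    thus ?thesis using True by (intro bexI[of _ i]) (auto simp: d_def)
  next
    case False thus ?thesis using l by (intro bexI[of _ lf]) (auto simp: d_def)
  qed
  moreover have "d lf = c" by (simp add: d_def)
  ultimately show ?thesis unfolding sol_def by blast
qed

lemma sol_neg: "sol S m c \<delta> \<Longrightarrow> sol S m (-c) (-\<delta>)"
proof -
  assume "sol S m c \<delta>"
  then obtain d where nz: "\<exists>i\<in>S. d i \<noteq> 0" and a: "dfS S d m = c" "d m = \<delta>"
    and z: "\<forall>j\<in>S. j \<noteq> m \<longrightarrow> dfS S d j = 0" unfolding sol_def by blast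
  have n: "dfS S (\<lambda>x. - d x) v = - dfS S d v" for v unfolding dfS_def by (simp add: sum_negf)
  show ?thesis unfolding sol_def
    by (rule exI[of _ "\<lambda>x. - d x"]) (use nz a z n in auto)
qed

lemma adj_cases: "hasse_adj S a b \<Longrightarrow> a < b \<or> b < a"
  unfolding hasse_adj_def covers_def by auto

lemma adj_in: "hasse_adj S a b \<Longrightarrow> a \<in> S \<and> b \<in> S"
  unfolding hasse_adj_def covers_def by auto

lemma covers_adj: "covers S a b \<Longrightarrow> hasse_adj S a b \<and> hasse_adj S b a"
  unfolding hasse_adj_def by auto

lemma order_cond_up:
  fixes lf :: "'a::order"
  assumes fin: "finite S" and inS: "lf \<in> S" "p \<in> S" "q \<in> S"
    and al: "\<forall>t\<in>S. hasse_adj S lf t \<longleftrightarrow> t = p"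
    and ap: "\<forall>t\<in>S. hasse_adj S p t \<longleftrightarrow> t = lf \<or> t = q"
    and lp: "lf < p"
  shows "(q < p \<longrightarrow> (\<forall>v\<in>S-{lf}. comparable lf v \<longleftrightarrow> v = p)) \<and>
         (p < q \<longrightarrow> (\<forall>v\<in>S-{lf}. comparable lf v \<longleftrightarrow> (v = p \<or> comparable p v)))"
proof -
  have F1: "\<not> v < lf" if vS: "v \<in> S" for v
  proof
    assume "v < lf"
    then obtain w where "w \<in> S" "covers S w lf" using cover_below[OF fin vS inS(1)] by blast
    hence "hasse_adj S lf w" "w < lf" using covers_adj unfolding covers_def by auto
    thus False using al \<open>w \<in> S\<close> lp by auto
  qed
  have F2: "p \<le> v" if vS: "v \<in> S" "lf < v" for v
  proof -
    obtain w where "w \<in> S" "covers S lf w" "w \<le> v" using cover_above[OF fin inS(1) vS(1) vS(2)] by blast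
    hence "hasse_adj S lf w" using covers_adj by blast
    hence "w = p" using al \<open>w \<in> S\<close> by blast
    thus ?thesis using \<open>w \<le> v\<close> by simp
  qed
  have T: "\<forall>v\<in>S-{lf}. comparable lf v \<longleftrightarrow> v = p" if qp: "q < p"
  proof
    fix v assume v: "v \<in> S-{lf}"
    show "comparable lf v \<longleftrightarrow> v = p"
    proof
      assume "comparable lf v"
      hence "lf < v" using F1 v unfolding comparable_def by auto
      hence "p \<le> v" using F2 v by auto
      show "v = p"
      proof (rule ccontr)
        assume "v \<noteq> p"
        hence "p < v" using \<open>p \<le> v\<close> by simp
        then obtain w where "w \<in> S" "covers S p w" using cover_above[OF fin inS(2)] v by blast
        hence "hasse_adj S p w" "p < w" using covers_adj unfolding covers_def by auto
        thus False using ap \<open>w \<in> S\<close> lp qp by auto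
      qed
    next
      assume "v = p" thus "comparable lf v" using lp unfolding comparable_def by simp
    qed
  qed
  have St: "\<forall>v\<in>S-{lf}. comparable lf v \<longleftrightarrow> (v = p \<or> comparable p v)" if pq: "p < q"
  proof
    fix v assume v: "v \<in> S-{lf}"
    show "comparable lf v \<longleftrightarrow> (v = p \<or> comparable p v)"
    proof
      assume "comparable lf v"
      hence "lf < v" using F1 v unfolding comparable_def by auto
      hence "p \<le> v" using F2 v by auto
      thus "v = p \<or> comparable p v" unfolding comparable_def by auto
    next
      assume h: "v = p \<or> comparable p v"
      show "comparable lf v"
      proof (cases "v = p")
        case True thus ?thesis using lp unfolding comparable_def by simp
      next
        case False
        hence "p < v \<or> v < p" using h unfolding comparable_def by auto
        thus ?thesis
        proof
          assume "p < v" thus ?thesis using lp unfolding comparable_def by auto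
        next
          assume "v < p"
          then obtain w where "w \<in> S" "covers S w p" "v \<le> w" using cover_below[OF fin _ inS(2)] v by blast
          hence "hasse_adj S p w" "w < p" using covers_adj unfolding covers_def by auto
          hence "w = lf" using ap \<open>w \<in> S\<close> pq by auto
          hence "v < lf" using \<open>v \<le> w\<close> v by auto
          thus ?thesis using F1 v by auto
        qed
      qed
    qed
  qed
  show ?thesis using T St by blast
qed

lemma order_cond_down:
  fixes lf :: "'a::order"
  assumes fin: "finite S" and inS: "lf \<in> S" "p \<in> S" "q \<in> S"
    and al: "\<forall>t\<in>S. hasse_adj S lf t \<longleftrightarrow> t = p"
    and ap: "\<forall>t\<in>S. hasse_adj S p t \<longleftrightarrow> t = lf \<or> t = q"
    and lp: "p < lf"
  shows "(p < q \<longrightarrow> (\<forall>v\<in>S-{lf}. comparable lf v \<longleftrightarrow> v = p)) \<and>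
         (q < p \<longrightarrow> (\<forall>v\<in>S-{lf}. comparable lf v \<longleftrightarrow> (v = p \<or> comparable p v)))"
proof -
  have F1: "\<not> lf < v" if vS: "v \<in> S" for v
  proof
    assume "lf < v"
    then obtain w where "w \<in> S" "covers S lf w" using cover_above[OF fin inS(1) vS] by blast
    hence "hasse_adj S lf w" "lf < w" using covers_adj unfolding covers_def by auto
    thus False using al \<open>w \<in> S\<close> lp by auto
  qed
  have F2: "v \<le> p" if vS: "v \<in> S" "v < lf" for v
  proof -
    obtain w where "w \<in> S" "covers S w lf" "v \<le> w" using cover_below[OF fin vS(1) inS(1) vS(2)] by blast
    hence "hasse_adj S lf w" using covers_adj by blast
    hence "w = p" using al \<open>w \<in> S\<close> by blast
    thus ?thesis using \<open>v \<le> w\<close> by simp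
  qed
  have T: "\<forall>v\<in>S-{lf}. comparable lf v \<longleftrightarrow> v = p" if qp: "p < q"
  proof
    fix v assume v: "v \<in> S-{lf}"
    show "comparable lf v \<longleftrightarrow> v = p"
    proof
      assume "comparable lf v"
      hence "v < lf" using F1 v unfolding comparable_def by auto
      hence "v \<le> p" using F2 v by auto
      show "v = p"
      proof (rule ccontr)
        assume "v \<noteq> p"
        hence "v < p" using \<open>v \<le> p\<close> by simp
        then obtain w where "w \<in> S" "covers S w p" using cover_below[OF fin _ inS(2)] v by blast
        hence "hasse_adj S p w" "w < p" using covers_adj unfolding covers_def by auto
        thus False using ap \<open>w \<in> S\<close> lp qp by auto
      qed
    next
      assume "v = p" thus "comparable lf v" using lp unfolding comparable_def by simp
    qed
  qed
  have St: "\<forall>v\<in>S-{lf}. comparable lf v \<longleftrightarrow> (v = p \<or> comparable p v)" if pq: "q < p"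
  proof
    fix v assume v: "v \<in> S-{lf}"
    show "comparable lf v \<longleftrightarrow> (v = p \<or> comparable p v)"
    proof
      assume "comparable lf v"
      hence "v < lf" using F1 v unfolding comparable_def by auto
      hence "v \<le> p" using F2 v by auto
      thus "v = p \<or> comparable p v" unfolding comparable_def by auto
    next
      assume h: "v = p \<or> comparable p v"
      show "comparable lf v"
      proof (cases "v = p")
        case True thus ?thesis using lp unfolding comparable_def by simp
      next
        case False
        hence "p < v \<or> v < p" using h unfolding comparable_def by auto
        thus ?thesis
        proof
          assume "v < p" thus ?thesis using lp unfolding comparable_def by auto
        next
          assume "p < v"
          then obtain w where "w \<in> S" "covers S p w" "w \<le> v" using cover_above[OF fin inS(2)] v by blast
          hence "hasse_adj S p w" "p < w" using covers_adj unfolding covers_def by auto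
          hence "w = lf" using ap \<open>w \<in> S\<close> pq by auto
          hence "lf < v" using \<open>w \<le> v\<close> v by auto
          thus ?thesis using F1 v by auto
        qed
      qed
    qed
  qed
  show ?thesis using T St by blast
qed

lemma grow:
  fixes lf :: "'a::order"
  assumes fin: "finite S" and inS: "lf \<in> S" "p \<in> S" "q \<in> S"
    and al: "\<forall>t\<in>S. hasse_adj S lf t \<longleftrightarrow> t = p"
    and ap: "\<forall>t\<in>S. hasse_adj S p t \<longleftrightarrow> t = lf \<or> t = q"
    and s: "sol (S-{lf}) p c \<delta>"
  shows "sol S lf (2*c - \<delta>) c"
proof -
  have alp: "hasse_adj S lf p" using al inS by blast
  have apq: "hasse_adj S p q" using ap inS by blast
  have plf: "p \<noteq> lf" using alp unfolding hasse_adj_def covers_def by auto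
  have o1: "lf < p \<or> p < lf" using adj_cases[OF alp] .
  have o2: "p < q \<or> q < p" using adj_cases[OF apq] .
  show ?thesis
  proof (cases "lf < p")
    case True
    note oc = order_cond_up[OF fin inS al ap True]
    show ?thesis using o2
    proof
      assume "p < q" thus ?thesis using grow_straight[OF fin inS(1) inS(2) plf _ s] oc by blast
    next
      assume "q < p" thus ?thesis using grow_turn[OF fin inS(1) inS(2) plf _ s] oc by blast
    qed
  next
    case False
    hence lt: "p < lf" using o1 by blast
    note oc = order_cond_down[OF fin inS al ap lt]
    show ?thesis using o2
    proof
      assume "q < p" thus ?thesis using grow_straight[OF fin inS(1) inS(2) plf _ s] oc by blast
    next
      assume "p < q" thus ?thesis using grow_turn[OF fin inS(1) inS(2) plf _ s] oc by blast
    qed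
  qed
qed

lemma covers_remove:
  fixes lf :: "'a::order"
  assumes fin: "finite S" and l: "lf \<in> S"
    and leaf: "\<forall>t\<in>S. \<forall>t'\<in>S. hasse_adj S lf t \<longrightarrow> hasse_adj S lf t' \<longrightarrow> t = t'"
    and x: "x \<in> S-{lf}" and y: "y \<in> S-{lf}"
  shows "covers (S-{lf}) x y \<longleftrightarrow> covers S x y"
proof
  assume c: "covers (S-{lf}) x y"
  show "covers S x y" unfolding covers_def
  proof (intro conjI)
    show "\<not> (\<exists>u\<in>S. x < u \<and> u < y)"
    proof
      assume "\<exists>u\<in>S. x < u \<and> u < y"
      then obtain u where u: "u \<in> S" "x < u" "u < y" by blast
      have "u = lf" using c u unfolding covers_def by auto
      obtain w where w: "w \<in> S" "covers S w lf" using cover_below[OF fin _ l] x u \<open>u = lf\<close> by blast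
      obtain w' where w': "w' \<in> S" "covers S lf w'" using cover_above[OF fin l _] y u \<open>u = lf\<close> by blast
      have "hasse_adj S lf w" "hasse_adj S lf w'" using w w' covers_adj by blast+
      hence "w = w'" using leaf w w' by blast
      thus False using w w' unfolding covers_def by auto
    qed
  qed (use c x y in \<open>simp_all add: covers_def\<close>)
next
  assume "covers S x y" thus "covers (S-{lf}) x y" using x y unfolding covers_def by auto
qed

lemma adj_remove:
  fixes lf :: "'a::order"
  assumes fin: "finite S" and l: "lf \<in> S"
    and leaf: "\<forall>t\<in>S. \<forall>t'\<in>S. hasse_adj S lf t \<longrightarrow> hasse_adj S lf t' \<longrightarrow> t = t'"
    and x: "x \<in> S-{lf}" and y: "y \<in> S-{lf}"
  shows "hasse_adj (S-{lf}) x y \<longleftrightarrow> hasse_adj S x y"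
  unfolding hasse_adj_def using covers_remove[OF assms] covers_remove[OF fin l leaf y x] by blast

definition adjm :: "'a::order set \<Rightarrow> ('a \<Rightarrow> nat) \<Rightarrow> (nat \<times> nat) set \<Rightarrow> bool" where
  "adjm S \<phi> E \<longleftrightarrow> (\<forall>x\<in>S. \<forall>y\<in>S. hasse_adj S x y \<longleftrightarrow> graph_adj E (\<phi> x) (\<phi> y))"

lemma adjm_remove:
  assumes fin: "finite S" and b: "bij_betw \<phi> S V" and a: "adjm S \<phi> E" and i: "i \<in> V"
    and gl: "\<forall>j\<in>V. \<forall>j'\<in>V. graph_adj E i j \<longrightarrow> graph_adj E i j' \<longrightarrow> j = j'"
  shows "adjm (S - {inv_into S \<phi> i}) \<phi> E" "bij_betw \<phi> (S - {inv_into S \<phi> i}) (V - {i})"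
proof -
  let ?l = "inv_into S \<phi> i"
  have l: "?l \<in> S" "\<phi> ?l = i" using b i by (auto simp: bij_betw_def inv_into_into f_inv_into_f)
  have inj: "inj_on \<phi> S" using b by (simp add: bij_betw_def)
  have leaf: "\<forall>t\<in>S. \<forall>t'\<in>S. hasse_adj S ?l t \<longrightarrow> hasse_adj S ?l t' \<longrightarrow> t = t'"
  proof (intro ballI impI)
    fix t t' assume t: "t \<in> S" "t' \<in> S" "hasse_adj S ?l t" "hasse_adj S ?l t'"
    hence "graph_adj E i (\<phi> t)" "graph_adj E i (\<phi> t')" using a l unfolding adjm_def by auto
    moreover have "\<phi> t \<in> V" "\<phi> t' \<in> V" using b t by (auto simp: bij_betw_def)
    ultimately have "\<phi> t = \<phi> t'" using gl by blast
    thus "t = t'" using inj t by (auto dest: inj_onD)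
  qed
  show "adjm (S - {?l}) \<phi> E" unfolding adjm_def
    using adj_remove[OF fin l(1) leaf] a unfolding adjm_def by auto
  have i1: "inj_on \<phi> (S - {?l})" using inj by (rule inj_on_subset) auto
  have i2: "\<phi> ` (S - {?l}) = V - {i}"
  proof
    show "\<phi> ` (S - {?l}) \<subseteq> V - {i}"
    proof
      fix y assume "y \<in> \<phi> ` (S - {?l})"
      then obtain x where x: "x \<in> S" "x \<noteq> ?l" "y = \<phi> x" by blast
      have "\<phi> x \<noteq> i" using x l inj by (metis inj_onD)
      thus "y \<in> V - {i}" using x b by (auto simp: bij_betw_def)
    qed
    show "V - {i} \<subseteq> \<phi> ` (S - {?l})"
    proof
      fix j assume j: "j \<in> V - {i}"
      have "inv_into S \<phi> j \<in> S" "\<phi> (inv_into S \<phi> j) = j" using b j by (auto simp: bij_betw_def inv_into_into f_inv_into_f)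
      moreover hence "inv_into S \<phi> j \<noteq> ?l" using j l by auto
      ultimately show "j \<in> \<phi> ` (S - {?l})" by (metis DiffI image_eqI singletonD)
    qed
  qed
  show "bij_betw \<phi> (S - {?l}) (V - {i})" using i1 i2 by (simp add: bij_betw_def)
qed

lemma grow_idx:
  assumes fin: "finite S" and b: "bij_betw \<phi> S V" and a: "adjm S \<phi> E"
    and V: "i \<in> V" "k \<in> V" "r \<in> V"
    and gi: "\<forall>j\<in>V. graph_adj E i j \<longleftrightarrow> j = k"
    and gk: "\<forall>j\<in>V. graph_adj E k j \<longleftrightarrow> j = i \<or> j = r"
    and s: "sol (S - {inv_into S \<phi> i}) (inv_into S \<phi> k) c \<delta>"
  shows "sol S (inv_into S \<phi> i) (2*c - \<delta>) c"
proof -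
  have inv: "inv_into S \<phi> j \<in> S \<and> \<phi> (inv_into S \<phi> j) = j" if "j \<in> V" for j
    using b that by (auto simp: bij_betw_def inv_into_into f_inv_into_f)
  have inj: "inj_on \<phi> S" using b by (simp add: bij_betw_def)
  have img: "\<phi> t \<in> V" if "t \<in> S" for t using b that by (auto simp: bij_betw_def)
  have eq: "t = inv_into S \<phi> j \<longleftrightarrow> \<phi> t = j" if "t \<in> S" "j \<in> V" for t j
    using inv[OF that(2)] inj that by (auto dest: inj_onD)
  show ?thesis
  proof (rule grow[OF fin _ _ _ _ _ s])
    show "inv_into S \<phi> i \<in> S" "inv_into S \<phi> k \<in> S" "inv_into S \<phi> r \<in> S" using inv V by auto
    show "\<forall>t\<in>S. hasse_adj S (inv_into S \<phi> i) t \<longleftrightarrow> t = inv_into S \<phi> k"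
      using a inv[OF V(1)] gi img eq V unfolding adjm_def by auto
    show "\<forall>t\<in>S. hasse_adj S (inv_into S \<phi> k) t \<longleftrightarrow> t = inv_into S \<phi> i \<or> t = inv_into S \<phi> r"
      using a inv[OF V(2)] gk img eq V unfolding adjm_def by auto
  qed
qed

lemma terminal_idx:
  assumes b: "bij_betw \<phi> S V" and a: "adjm S \<phi> E" and V: "i \<in> V" "k \<in> V"
    and gi: "\<forall>j\<in>V. graph_adj E i j \<longleftrightarrow> j = k"
  shows "terminal_point S (inv_into S \<phi> i)"
proof -
  have inv: "inv_into S \<phi> j \<in> S \<and> \<phi> (inv_into S \<phi> j) = j" if "j \<in> V" for j
    using b that by (auto simp: bij_betw_def inv_into_into f_inv_into_f)
  have inj: "inj_on \<phi> S" using b by (simp add: bij_betw_def)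
  have img: "\<phi> t \<in> V" if "t \<in> S" for t using b that by (auto simp: bij_betw_def)
  have "{t\<in>S. hasse_adj S (inv_into S \<phi> i) t} \<subseteq> {inv_into S \<phi> k}"
  proof
    fix t assume "t \<in> {t\<in>S. hasse_adj S (inv_into S \<phi> i) t}"
    hence t: "t \<in> S" "graph_adj E i (\<phi> t)" using a inv[OF V(1)] unfolding adjm_def by auto
    hence "\<phi> t = k" using gi img by blast
    thus "t \<in> {inv_into S \<phi> k}" using inv[OF V(2)] inj t by (auto dest: inj_onD)
  qed
  hence "card {t\<in>S. hasse_adj S (inv_into S \<phi> i) t} \<le> 1"
    using card_mono[of "{inv_into S \<phi> k}"] by fastforce
  thus ?thesis unfolding terminal_point_def hasse_degree_def using inv[OF V(1)] by simp
qed

lemma sol_dynkin: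
  assumes "sol S m c \<delta>" "m \<in> S" "\<bar>c\<bar> \<le> 2"
  shows "dynkin_point S m"
proof (cases "c \<ge> 0")
  case True thus ?thesis using assms unfolding sol_def dynkin_point_def by auto
next
  case False
  have "sol S m (-c) (-\<delta>)" using sol_neg assms(1) .
  thus ?thesis using assms False unfolding sol_def dynkin_point_def by auto
qed

fun allbl :: "nat \<Rightarrow> bool list list" where
  "allbl 0 = [[]]"
| "allbl (Suc n) = [b#bs. b \<leftarrow> [False,True], bs \<leftarrow> allbl n]"

definition orient :: "(nat\<times>nat) list \<Rightarrow> bool list \<Rightarrow> (nat\<times>nat) list" where
  "orient El bs = map (\<lambda>((i,j),b). if b then (i,j) else (j,i)) (zip El bs)"

definition comp :: "(nat\<times>nat) list \<Rightarrow> (nat\<times>nat) list \<Rightarrow> (nat\<times>nat) list" where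
  "comp R T = [(a,c). (a,b) \<leftarrow> R, (b',c) \<leftarrow> T, b = b']"

fun clos :: "nat \<Rightarrow> (nat\<times>nat) list \<Rightarrow> (nat\<times>nat) list" where
  "clos 0 R = R"
| "clos (Suc k) R = (let T = clos k R in remdups (T @ comp R T))"

definition good :: "nat list \<Rightarrow> nat \<Rightarrow> int \<Rightarrow> int \<Rightarrow> int list \<Rightarrow> (nat\<times>nat) list \<Rightarrow> (nat\<times>nat) list \<Rightarrow> bool" where
  "good V m c \<delta> d R T = (list_all (\<lambda>x. x \<in> set T) (comp R T) \<and> d!m = \<delta> \<and> list_ex (\<lambda>v. d!v \<noteq> 0) V \<and>
     list_all (\<lambda>v. 2 * d!v + sum_list (map (\<lambda>u. if u \<noteq> v \<and> ((u,v) \<in> set T \<or> (v,u) \<in> set T) then d!u else 0) V)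
        = (if v = m then c else 0)) V)"

definition rowok :: "nat list \<Rightarrow> (nat\<times>nat) list \<Rightarrow> nat \<Rightarrow> int \<Rightarrow> int \<Rightarrow> bool list \<times> int list \<Rightarrow> bool" where
  "rowok V El m c \<delta> r = (case r of (bs,d) \<Rightarrow> good V m c \<delta> d (orient El bs) (clos (length V) (orient El bs)))"

definition checkall :: "nat list \<Rightarrow> (nat\<times>nat) list \<Rightarrow> nat \<Rightarrow> int \<Rightarrow> int \<Rightarrow> (bool list \<times> int list) list \<Rightarrow> bool" where
  "checkall V El m c \<delta> tab = (map fst tab = allbl (length El) \<and> list_all (rowok V El m c \<delta>) tab)"

lemma allbl_set: "set (allbl n) = {bs. length bs = n}"
proof (induction n)
  case 0 thus ?case by auto
next
  case (Suc n)
  show ?case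
  proof
    show "set (allbl (Suc n)) \<subseteq> {bs. length bs = Suc n}" using Suc by auto
    show "{bs. length bs = Suc n} \<subseteq> set (allbl (Suc n))"
    proof
      fix bs :: "bool list" assume "bs \<in> {bs. length bs = Suc n}"
      then obtain b bs' where "bs = b # bs'" "length bs' = n" by (cases bs) auto
      thus "bs \<in> set (allbl (Suc n))" using Suc by (cases b) auto
    qed
  qed
qed

lemma comp_set: "set (comp R T) = set R O set T"
  unfolding comp_def by auto

lemma clos_sup: "set R \<subseteq> set (clos k R)"
  by (induction k) (auto simp: Let_def)

lemma clos_sub: "set (clos k R) \<subseteq> (set R)\<^sup>+"
proof (induction k)
  case 0 thus ?case by auto
next
  case (Suc k)
  have "set R O set (clos k R) \<subseteq> (set R)\<^sup>+"
  proof
    fix e assume "e \<in> set R O set (clos k R)"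
    then obtain a b c where "e = (a,c)" "(a,b) \<in> set R" "(b,c) \<in> set (clos k R)" by blast
    thus "e \<in> (set R)\<^sup>+" using Suc trancl_into_trancl2[of a b "set R" c] by blast
  qed
  thus ?case using Suc by (auto simp: Let_def comp_set)
qed

lemma orient_map: "orient El (map f El) = map (\<lambda>(i,j). if f (i,j) then (i,j) else (j,i)) El"
  by (induction El) (auto simp: orient_def)

lemma check_sound:
  fixes S :: "'a::order set"
  assumes b: "bij_betw \<phi> S (set V)" and dist: "distinct V" and a: "adjm S \<phi> (set El)"
    and El: "\<forall>(i,j)\<in>set El. i \<in> set V \<and> j \<in> set V"
    and m: "m \<in> set V" and ch: "checkall V El m c \<delta> tab"
  shows "sol S (inv_into S \<phi> m) c \<delta>"
proof -
  have fin: "finite S" using b bij_betw_finite by blast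
  have inj: "inj_on \<phi> S" using b by (simp add: bij_betw_def)
  have img: "\<phi> t \<in> set V" if "t \<in> S" for t using b that by (auto simp: bij_betw_def)
  have inv: "inv_into S \<phi> j \<in> S \<and> \<phi> (inv_into S \<phi> j) = j" if "j \<in> set V" for j
    using b that by (auto simp: bij_betw_def inv_into_into f_inv_into_f)
  have invphi: "inv_into S \<phi> (\<phi> x) = x" if "x \<in> S" for x using inj that by simp
  define R\<phi> where "R\<phi> = {(\<phi> x, \<phi> y) | x y. covers S x y}"
  define bs where "bs = map (\<lambda>e. e \<in> R\<phi>) El"
  have "bs \<in> set (map fst tab)" using ch unfolding checkall_def by (simp add: allbl_set bs_def)
  then obtain d where bd: "(bs, d) \<in> set tab" by auto
  define R where "R = orient El bs"
  define T where "T = clos (length V) R"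
  have g: "good V m c \<delta> d R T" using ch bd unfolding checkall_def rowok_def R_def T_def
    by (auto simp: list_all_iff)
  have cov_in: "covers S x y \<Longrightarrow> x \<in> S \<and> y \<in> S \<and> x < y" for x y unfolding covers_def by auto
  have setR: "set R = R\<phi>"
  proof
    show "set R \<subseteq> R\<phi>"
    proof
      fix e assume "e \<in> set R"
      then obtain i j where ij: "(i,j) \<in> set El" "e = (if (i,j) \<in> R\<phi> then (i,j) else (j,i))"
        unfolding R_def bs_def orient_map by auto
      show "e \<in> R\<phi>"
      proof (cases "(i,j) \<in> R\<phi>")
        case True thus ?thesis using ij by simp
      next
        case False
        have iV: "i \<in> set V" "j \<in> set V" using El ij by auto
        have "graph_adj (set El) (\<phi> (inv_into S \<phi> i)) (\<phi> (inv_into S \<phi> j))"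
          using inv[OF iV(1)] inv[OF iV(2)] ij unfolding graph_adj_def by auto
        hence "hasse_adj S (inv_into S \<phi> i) (inv_into S \<phi> j)" using a inv iV unfolding adjm_def by blast
        hence "covers S (inv_into S \<phi> i) (inv_into S \<phi> j) \<or> covers S (inv_into S \<phi> j) (inv_into S \<phi> i)"
          unfolding hasse_adj_def .
        hence "(i,j) \<in> R\<phi> \<or> (j,i) \<in> R\<phi>" unfolding R\<phi>_def using inv iV by force
        thus ?thesis using False ij by simp
      qed
    qed
    show "R\<phi> \<subseteq> set R"
    proof
      fix e assume "e \<in> R\<phi>"
      then obtain x y where xy: "covers S x y" "e = (\<phi> x, \<phi> y)" unfolding R\<phi>_def by blast
      hence xyS: "x \<in> S" "y \<in> S" "x < y" using cov_in by auto
      have "hasse_adj S x y" using xy(1) unfolding hasse_adj_def by simp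
      hence "graph_adj (set El) (\<phi> x) (\<phi> y)" using a xyS unfolding adjm_def by blast
      hence "(\<phi> x, \<phi> y) \<in> set El \<or> (\<phi> y, \<phi> x) \<in> set El" unfolding graph_adj_def .
      thus "e \<in> set R"
      proof
        assume h: "(\<phi> x, \<phi> y) \<in> set El"
        have "(\<phi> x, \<phi> y) \<in> R\<phi>" using xy unfolding R\<phi>_def by blast
        thus ?thesis unfolding R_def bs_def orient_map using h xy by force
      next
        assume h: "(\<phi> y, \<phi> x) \<in> set El"
        have "(\<phi> y, \<phi> x) \<notin> R\<phi>"
        proof
          assume "(\<phi> y, \<phi> x) \<in> R\<phi>"
          then obtain y' x' where "covers S y' x'" "\<phi> y' = \<phi> y" "\<phi> x' = \<phi> x" unfolding R\<phi>_def by auto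
          moreover hence "y' = y" "x' = x" using inj cov_in xyS by (auto dest: inj_onD)
          ultimately have "y < x" using cov_in by blast
          thus False using xyS by simp
        qed
        thus ?thesis unfolding R_def bs_def orient_map using h xy by force
      qed
    qed
  qed
  have closed: "(a, b') \<in> set R \<Longrightarrow> (b', c') \<in> set T \<Longrightarrow> (a, c') \<in> set T" for a b' c'
    using g unfolding good_def list_all_iff comp_set by blast
  have tr: "\<exists>x y. x \<in> S \<and> y \<in> S \<and> \<phi> x = a \<and> \<phi> y = b' \<and> x < y" if "(a, b') \<in> R\<phi>\<^sup>+" for a b'
    using that
  proof (induction rule: trancl_induct)
    case (base y) thus ?case unfolding R\<phi>_def using cov_in by blast
  next
    case (step y z)
    then obtain x1 y1 where 1: "x1 \<in> S" "y1 \<in> S" "\<phi> x1 = a" "\<phi> y1 = y" "x1 < y1" by blast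
    obtain y2 z2 where 2: "covers S y2 z2" "\<phi> y2 = y" "\<phi> z2 = z" using step(2) unfolding R\<phi>_def by blast
    have "y2 = y1" using 1 2 cov_in inj by (metis inj_onD)
    thus ?case using 1 2 cov_in by (metis order.strict_trans)
  qed
  have T1: "x < y" if "x \<in> S" "y \<in> S" "(\<phi> x, \<phi> y) \<in> set T" for x y
  proof -
    have "(\<phi> x, \<phi> y) \<in> R\<phi>\<^sup>+" using clos_sub that(3) setR unfolding T_def by blast
    then obtain x' y' where "x' \<in> S" "y' \<in> S" "\<phi> x' = \<phi> x" "\<phi> y' = \<phi> y" "x' < y'" using tr by blast
    thus ?thesis using inj that by (metis inj_onD)
  qed
  have T2: "\<forall>x\<in>S. card {z\<in>S. x < z \<and> z \<le> y} = n \<longrightarrow> x < y \<longrightarrow> (\<phi> x, \<phi> y) \<in> set T" if yS: "y \<in> S" for y n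
  proof (induction n rule: less_induct)
    case (less n)
    show ?case
    proof (intro ballI impI)
      fix x assume x: "x \<in> S" and cn: "card {z\<in>S. x < z \<and> z \<le> y} = n" and xy: "x < y"
      obtain w where w: "w \<in> S" "covers S x w" "w \<le> y" using cover_above[OF fin x yS xy] by blast
      have xwR: "(\<phi> x, \<phi> w) \<in> set R" using setR w unfolding R\<phi>_def by blast
      show "(\<phi> x, \<phi> y) \<in> set T"
      proof (cases "w = y")
        case True thus ?thesis using xwR clos_sup unfolding T_def by blast
      next
        case False
        hence wy: "w < y" using w by simp
        have xw: "x < w" using w cov_in by blast
        have sub: "{z\<in>S. w < z \<and> z \<le> y} \<subset> {z\<in>S. x < z \<and> z \<le> y}"
          using xw w by auto
        have "card {z\<in>S. w < z \<and> z \<le> y} < n" using psubset_card_mono[OF _ sub] fin cn by simp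
        hence "(\<phi> w, \<phi> y) \<in> set T" using less w wy by blast
        thus ?thesis using closed xwR by blast
      qed
    qed
  qed
  have lessT: "x < y \<longleftrightarrow> (\<phi> x, \<phi> y) \<in> set T" if "x \<in> S" "y \<in> S" for x y
    using T1[OF that] T2[OF that(2)] that by blast
  define D where "D x = d ! (\<phi> x)" for x
  have df: "dfS S D x = 2 * d!(\<phi> x) + sum_list (map (\<lambda>u. if u \<noteq> \<phi> x \<and> ((u,\<phi> x) \<in> set T \<or> (\<phi> x,u) \<in> set T) then d!u else 0) V)"
    if x: "x \<in> S" for x
  proof -
    let ?P = "\<lambda>u. u \<noteq> \<phi> x \<and> ((u,\<phi> x) \<in> set T \<or> (\<phi> x,u) \<in> set T)"
    have "sum_list (map (\<lambda>u. if ?P u then d!u else 0) V) = (\<Sum>u\<in>set V. if ?P u then d!u else 0)"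
      using dist by (simp add: sum_list_distinct_conv_sum_set)
    also have "\<dots> = (\<Sum>u\<in>{u\<in>set V. ?P u}. d!u)" by (simp add: sum.inter_filter)
    also have "{u\<in>set V. ?P u} = \<phi> ` {j\<in>S. j \<noteq> x \<and> comparable j x}"
    proof
      show "{u\<in>set V. ?P u} \<subseteq> \<phi> ` {j\<in>S. j \<noteq> x \<and> comparable j x}"
      proof
        fix u assume u: "u \<in> {u\<in>set V. ?P u}"
        let ?j = "inv_into S \<phi> u"
        have j: "?j \<in> S" "\<phi> ?j = u" using inv u by auto
        have "?j \<noteq> x" using u j by auto
        moreover have "comparable ?j x" using u j lessT[OF j(1) x] lessT[OF x j(1)] unfolding comparable_def by auto
        ultimately show "u \<in> \<phi> ` {j\<in>S. j \<noteq> x \<and> comparable j x}" using j by force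
      qed
      show "\<phi> ` {j\<in>S. j \<noteq> x \<and> comparable j x} \<subseteq> {u\<in>set V. ?P u}"
      proof
        fix u assume "u \<in> \<phi> ` {j\<in>S. j \<noteq> x \<and> comparable j x}"
        then obtain j where j: "j \<in> S" "j \<noteq> x" "comparable j x" "u = \<phi> j" by blast
        have "\<phi> j \<noteq> \<phi> x" using j x inj by (metis inj_onD)
        thus "u \<in> {u\<in>set V. ?P u}" using j img lessT[OF j(1) x] lessT[OF x j(1)] unfolding comparable_def by auto
      qed
    qed
    also have "(\<Sum>u\<in>\<phi> ` {j\<in>S. j \<noteq> x \<and> comparable j x}. d!u) = (\<Sum>j\<in>{j\<in>S. j \<noteq> x \<and> comparable j x}. D j)"
      by (subst sum.reindex) (auto simp: D_def intro: inj_on_subset[OF inj])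
    finally show ?thesis unfolding dfS_def D_def by simp
  qed
  have eqs: "dfS S D x = (if \<phi> x = m then c else 0)" if x: "x \<in> S" for x
    using g img[OF x] df[OF x] unfolding good_def list_all_iff by auto
  let ?m = "inv_into S \<phi> m"
  have mm: "?m \<in> S" "\<phi> ?m = m" using inv m by auto
  show ?thesis unfolding sol_def
  proof (intro exI[of _ D] conjI)
    show "\<exists>i\<in>S. D i \<noteq> 0"
    proof -
      obtain v where v: "v \<in> set V" "d!v \<noteq> 0" using g unfolding good_def list_ex_iff by blast
      thus ?thesis using inv[OF v(1)] unfolding D_def by metis
    qed
    show "dfS S D ?m = c" using eqs mm by simp
    show "D ?m = \<delta>" using g mm unfolding good_def D_def by simp
    show "\<forall>j\<in>S. j \<noteq> ?m \<longrightarrow> dfS S D j = 0"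
    proof (intro ballI impI)
      fix j assume "j \<in> S" "j \<noteq> ?m"
      hence "\<phi> j \<noteq> m" using mm invphi by metis
      thus "dfS S D j = 0" using eqs \<open>j \<in> S\<close> by simp
    qed
  qed
qed

definition tabD4 :: "(bool list \<times> int list) list" where
  "tabD4 = [([False,False,False],[2,0,(-1),(-1)]),
   ([False,False,True],[2,(-1),(-1),1]),
   ([False,True,False],[2,(-1),1,(-1)]),
   ([False,True,True],[2,(-2),1,1]),
   ([True,False,False],[2,(-2),1,1]),
   ([True,False,True],[2,(-1),1,(-1)]),
   ([True,True,False],[2,(-1),(-1),1]),
   ([True,True,True],[2,0,(-1),(-1)])]"

lemma chkD4: "checkall [0,1,2,3] [(0,1),(1,2),(1,3)] 0 2 2 tabD4"
  unfolding tabD4_def by code_simp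

definition tabE7b :: "(bool list \<times> int list) list" where
  "tabE7b = [([False,False,False,False],[(-2),(-2),(-2),5,0,0,3]),
   ([False,False,False,True],[(-2),(-2),1,5,0,0,(-3)]),
   ([False,False,True,False],[2,2,(-3),5,0,0,(-3)]),
   ([False,False,True,True],[2,2,(-6),5,0,0,3]),
   ([False,True,False,False],[(-2),4,(-6),5,0,0,3]),
   ([False,True,False,True],[(-2),4,(-3),5,0,0,(-3)]),
   ([False,True,True,False],[2,(-4),1,5,0,0,(-3)]),
   ([False,True,True,True],[2,(-4),(-2),5,0,0,3]),
   ([True,False,False,False],[2,(-4),(-2),5,0,0,3]),
   ([True,False,False,True],[2,(-4),1,5,0,0,(-3)]),
   ([True,False,True,False],[(-2),4,(-3),5,0,0,(-3)]),
   ([True,False,True,True],[(-2),4,(-6),5,0,0,3]),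
   ([True,True,False,False],[2,2,(-6),5,0,0,3]),
   ([True,True,False,True],[2,2,(-3),5,0,0,(-3)]),
   ([True,True,True,False],[(-2),(-2),1,5,0,0,(-3)]),
   ([True,True,True,True],[(-2),(-2),(-2),5,0,0,3])]"

lemma chkE7b: "checkall [0,1,2,3,6] [(0,1),(1,2),(2,3),(2,6)] 3 4 5 tabE7b"
  unfolding tabE7b_def by code_simp

definition tabE8b :: "(bool list \<times> int list) list" where
  "tabE8b = [([False,False,False,False],[(-2),(-2),(-2),5,0,0,0,3]),
   ([False,False,False,True],[(-2),(-2),1,5,0,0,0,(-3)]),
   ([False,False,True,False],[2,2,(-3),5,0,0,0,(-3)]),
   ([False,False,True,True],[2,2,(-6),5,0,0,0,3]),
   ([False,True,False,False],[(-2),4,(-6),5,0,0,0,3]),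
   ([False,True,False,True],[(-2),4,(-3),5,0,0,0,(-3)]),
   ([False,True,True,False],[2,(-4),1,5,0,0,0,(-3)]),
   ([False,True,True,True],[2,(-4),(-2),5,0,0,0,3]),
   ([True,False,False,False],[2,(-4),(-2),5,0,0,0,3]),
   ([True,False,False,True],[2,(-4),1,5,0,0,0,(-3)]),
   ([True,False,True,False],[(-2),4,(-3),5,0,0,0,(-3)]),
   ([True,False,True,True],[(-2),4,(-6),5,0,0,0,3]),
   ([True,True,False,False],[2,2,(-6),5,0,0,0,3]),
   ([True,True,False,True],[2,2,(-3),5,0,0,0,(-3)]),
   ([True,True,True,False],[(-2),(-2),1,5,0,0,0,(-3)]),
   ([True,True,True,True],[(-2),(-2),(-2),5,0,0,0,3])]"

lemma chkE8b: "checkall [0,1,2,3,7] [(0,1),(1,2),(2,3),(2,7)] 3 4 5 tabE8b"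
  unfolding tabE8b_def by code_simp

definition tabE8xb :: "(bool list \<times> int list) list" where
  "tabE8xb = [([False,False,False,False],[(-2),(-2),(-2),5,0,0,0,0,3]),
   ([False,False,False,True],[(-2),(-2),1,5,0,0,0,0,(-3)]),
   ([False,False,True,False],[2,2,(-3),5,0,0,0,0,(-3)]),
   ([False,False,True,True],[2,2,(-6),5,0,0,0,0,3]),
   ([False,True,False,False],[(-2),4,(-6),5,0,0,0,0,3]),
   ([False,True,False,True],[(-2),4,(-3),5,0,0,0,0,(-3)]),
   ([False,True,True,False],[2,(-4),1,5,0,0,0,0,(-3)]),
   ([False,True,True,True],[2,(-4),(-2),5,0,0,0,0,3]),
   ([True,False,False,False],[2,(-4),(-2),5,0,0,0,0,3]),
   ([True,False,False,True],[2,(-4),1,5,0,0,0,0,(-3)]),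
   ([True,False,True,False],[(-2),4,(-3),5,0,0,0,0,(-3)]),
   ([True,False,True,True],[(-2),4,(-6),5,0,0,0,0,3]),
   ([True,True,False,False],[2,2,(-6),5,0,0,0,0,3]),
   ([True,True,False,True],[2,2,(-3),5,0,0,0,0,(-3)]),
   ([True,True,True,False],[(-2),(-2),1,5,0,0,0,0,(-3)]),
   ([True,True,True,True],[(-2),(-2),(-2),5,0,0,0,0,3])]"

lemma chkE8xb: "checkall [0,1,2,3,8] [(0,1),(1,2),(2,3),(2,8)] 3 4 5 tabE8xb"
  unfolding tabE8xb_def by code_simp

definition tabE7xb :: "(bool list \<times> int list) list" where
  "tabE7xb = [([False,False,False,False,False],[(-1),(-1),(-1),(-1),3,0,0,2]),
   ([False,False,False,False,True],[(-1),(-1),(-1),1,3,0,0,(-2)]),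
   ([False,False,False,True,False],[1,1,1,(-2),3,0,0,(-2)]),
   ([False,False,False,True,True],[1,1,1,(-4),3,0,0,2]),
   ([False,False,True,False,False],[(-1),(-1),3,(-4),3,0,0,2]),
   ([False,False,True,False,True],[(-1),(-1),3,(-2),3,0,0,(-2)]),
   ([False,False,True,True,False],[1,1,(-3),1,3,0,0,(-2)]),
   ([False,False,True,True,True],[1,1,(-3),(-1),3,0,0,2]),
   ([False,True,False,False,False],[(-1),2,(-3),(-1),3,0,0,2]),
   ([False,True,False,False,True],[(-1),2,(-3),1,3,0,0,(-2)]),
   ([False,True,False,True,False],[1,(-2),3,(-2),3,0,0,(-2)]),
   ([False,True,False,True,True],[1,(-2),3,(-4),3,0,0,2]),
   ([False,True,True,False,False],[(-1),2,1,(-4),3,0,0,2]),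
   ([False,True,True,False,True],[(-1),2,1,(-2),3,0,0,(-2)]),
   ([False,True,True,True,False],[1,(-2),(-1),1,3,0,0,(-2)]),
   ([False,True,True,True,True],[1,(-2),(-1),(-1),3,0,0,2]),
   ([True,False,False,False,False],[1,(-2),(-1),(-1),3,0,0,2]),
   ([True,False,False,False,True],[1,(-2),(-1),1,3,0,0,(-2)]),
   ([True,False,False,True,False],[(-1),2,1,(-2),3,0,0,(-2)]),
   ([True,False,False,True,True],[(-1),2,1,(-4),3,0,0,2]),
   ([True,False,True,False,False],[1,(-2),3,(-4),3,0,0,2]),
   ([True,False,True,False,True],[1,(-2),3,(-2),3,0,0,(-2)]),
   ([True,False,True,True,False],[(-1),2,(-3),1,3,0,0,(-2)]),
   ([True,False,True,True,True],[(-1),2,(-3),(-1),3,0,0,2]),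
   ([True,True,False,False,False],[1,1,(-3),(-1),3,0,0,2]),
   ([True,True,False,False,True],[1,1,(-3),1,3,0,0,(-2)]),
   ([True,True,False,True,False],[(-1),(-1),3,(-2),3,0,0,(-2)]),
   ([True,True,False,True,True],[(-1),(-1),3,(-4),3,0,0,2]),
   ([True,True,True,False,False],[1,1,1,(-4),3,0,0,2]),
   ([True,True,True,False,True],[1,1,1,(-2),3,0,0,(-2)]),
   ([True,True,True,True,False],[(-1),(-1),(-1),1,3,0,0,(-2)]),
   ([True,True,True,True,True],[(-1),(-1),(-1),(-1),3,0,0,2])]"

lemma chkE7xb: "checkall [0,1,2,3,4,7] [(0,1),(1,2),(2,3),(3,4),(3,7)] 4 2 3 tabE7xb"
  unfolding tabE7xb_def by code_simp

definition tabE6b :: "(bool list \<times> int list) list" where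
  "tabE6b = [([False,False,False,False,False],[(-1),(-1),(-1),1,1,2]),
   ([False,False,False,False,True],[1,1,(-1),(-1),(-1),2]),
   ([False,False,False,True,False],[(-1),(-1),(-1),2,(-1),2]),
   ([False,False,False,True,True],[1,1,(-1),(-2),1,2]),
   ([False,False,True,False,False],[(-1),(-1),1,(-2),1,2]),
   ([False,False,True,False,True],[1,1,(-3),2,(-1),2]),
   ([False,False,True,True,False],[(-1),(-1),1,(-1),(-1),2]),
   ([False,False,True,True,True],[1,1,(-3),1,1,2]),
   ([False,True,False,False,False],[(-1),2,(-3),1,1,2]),
   ([False,True,False,False,True],[1,(-2),1,(-1),(-1),2]),
   ([False,True,False,True,False],[(-1),2,(-3),2,(-1),2]),
   ([False,True,False,True,True],[1,(-2),1,(-2),1,2]),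
   ([False,True,True,False,False],[(-1),2,(-1),(-2),1,2]),
   ([False,True,True,False,True],[1,(-2),(-1),2,(-1),2]),
   ([False,True,True,True,False],[(-1),2,(-1),(-1),(-1),2]),
   ([False,True,True,True,True],[1,(-2),(-1),1,1,2]),
   ([True,False,False,False,False],[1,(-2),(-1),1,1,2]),
   ([True,False,False,False,True],[(-1),2,(-1),(-1),(-1),2]),
   ([True,False,False,True,False],[1,(-2),(-1),2,(-1),2]),
   ([True,False,False,True,True],[(-1),2,(-1),(-2),1,2]),
   ([True,False,True,False,False],[1,(-2),1,(-2),1,2]),
   ([True,False,True,False,True],[(-1),2,(-3),2,(-1),2]),
   ([True,False,True,True,False],[1,(-2),1,(-1),(-1),2]),
   ([True,False,True,True,True],[(-1),2,(-3),1,1,2]),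
   ([True,True,False,False,False],[1,1,(-3),1,1,2]),
   ([True,True,False,False,True],[(-1),(-1),1,(-1),(-1),2]),
   ([True,True,False,True,False],[1,1,(-3),2,(-1),2]),
   ([True,True,False,True,True],[(-1),(-1),1,(-2),1,2]),
   ([True,True,True,False,False],[1,1,(-1),(-2),1,2]),
   ([True,True,True,False,True],[(-1),(-1),(-1),2,(-1),2]),
   ([True,True,True,True,False],[1,1,(-1),(-1),(-1),2]),
   ([True,True,True,True,True],[(-1),(-1),(-1),1,1,2])]"

lemma chkE6b: "checkall [0,1,2,3,4,5] [(0,1),(1,2),(2,3),(3,4),(2,5)] 5 1 2 tabE6b"
  unfolding tabE6b_def by code_simp

lemma inv_sub:
  assumes "inj_on \<phi> S" "A \<subseteq> S" "j \<in> \<phi> ` A"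
  shows "inv_into A \<phi> j = inv_into S \<phi> j"
proof -
  have "inv_into A \<phi> j \<in> A" "\<phi> (inv_into A \<phi> j) = j" using assms(3) by (auto simp: inv_into_into f_inv_into_f)
  thus ?thesis using assms(1,2) by (metis inv_into_f_eq subsetD)
qed

lemma adjm_transfer:
  assumes "adjm S \<phi> E" "bij_betw \<phi> S V" "\<forall>i\<in>V. \<forall>j\<in>V. graph_adj E i j \<longleftrightarrow> graph_adj E' i j"
  shows "adjm S \<phi> E'"
  using assms unfolding adjm_def bij_betw_def by auto

lemma arm_step:
  assumes V: "i \<in> V" "k \<in> V" "r \<in> V" "k \<noteq> i"
    and gi: "\<forall>j\<in>V. graph_adj E i j \<longleftrightarrow> j = k"
    and gk: "\<forall>j\<in>V. graph_adj E k j \<longleftrightarrow> j = i \<or> j = r"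
    and IH: "\<forall>(S::'a::order set) \<phi>. finite S \<longrightarrow> bij_betw \<phi> S (V - {i}) \<longrightarrow> adjm S \<phi> E \<longrightarrow> sol S (inv_into S \<phi> k) c \<delta>"
  shows "\<forall>(S::'a set) \<phi>. finite S \<longrightarrow> bij_betw \<phi> S V \<longrightarrow> adjm S \<phi> E \<longrightarrow> sol S (inv_into S \<phi> i) (2*c - \<delta>) c"
proof (intro allI impI)
  fix S :: "'a set" and \<phi>
  assume fin: "finite S" and b: "bij_betw \<phi> S V" and a: "adjm S \<phi> E"
  have gl: "\<forall>j\<in>V. \<forall>j'\<in>V. graph_adj E i j \<longrightarrow> graph_adj E i j' \<longrightarrow> j = j'" using gi by simp
  note rm = adjm_remove[OF fin b a V(1) gl]
  let ?S' = "S - {inv_into S \<phi> i}"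
  have "sol ?S' (inv_into ?S' \<phi> k) c \<delta>" using IH[rule_format, OF _ rm(2) rm(1)] fin by simp
  moreover have "inv_into ?S' \<phi> k = inv_into S \<phi> k"
    using inv_sub[of \<phi> S ?S' k] rm(2) b V by (auto simp: bij_betw_def)
  ultimately have "sol ?S' (inv_into S \<phi> k) c \<delta>" by simp
  thus "sol S (inv_into S \<phi> i) (2*c - \<delta>) c" using grow_idx[OF fin b a V(1-3) gi gk] by blast
qed

lemma base_check:
  assumes "checkall V El m c \<delta> tab" "distinct V" "\<forall>(i,j)\<in>set El. i \<in> set V \<and> j \<in> set V" "m \<in> set V"
    "\<forall>i\<in>set V. \<forall>j\<in>set V. graph_adj E i j \<longleftrightarrow> graph_adj (set El) i j"
  shows "\<forall>(S::'a::order set) \<phi>. finite S \<longrightarrow> bij_betw \<phi> S (set V) \<longrightarrow> adjm S \<phi> E \<longrightarrow> sol S (inv_into S \<phi> m) c \<delta>"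
  using check_sound[OF _ assms(2) _ assms(3,4,1)] adjm_transfer assms(5) by blast

lemma finish:
  fixes S :: "'a::order set"
  assumes "finite S" "hasse_iso S (N, E)" "i < N" "k < N"
    and gi: "\<forall>j<N. graph_adj E i j \<longleftrightarrow> j = k"
    and sl: "\<forall>(S::'a::order set) \<phi>. finite S \<longrightarrow> bij_betw \<phi> S {..<N} \<longrightarrow> adjm S \<phi> E \<longrightarrow> sol S (inv_into S \<phi> i) c \<delta>"
    and c: "\<bar>c\<bar> \<le> 2"
  shows "\<exists>s\<in>S. terminal_point S s \<and> dynkin_point S s"
proof -
  obtain \<phi> where b: "bij_betw \<phi> S {..<N}" and a: "adjm S \<phi> E"
    using assms(2) unfolding hasse_iso_def adjm_def by auto
  have t: "terminal_point S (inv_into S \<phi> i)" using terminal_idx[OF b a] assms(3,4) gi by auto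
  have "sol S (inv_into S \<phi> i) c \<delta>" using sl[rule_format, OF assms(1) b a] .
  moreover have "inv_into S \<phi> i \<in> S" using b assms(3) by (auto simp: bij_betw_def inv_into_into)
  ultimately show ?thesis using t sol_dynkin c by blast
qed

lemma gD: "graph_adj (snd (D_graph n)) i j \<longleftrightarrow>
   (j = i+1 \<and> j < n-1) \<or> (i = j+1 \<and> i < n-1) \<or> (i = n-3 \<and> j = n-1) \<or> (j = n-3 \<and> i = n-1)"
  unfolding D_graph_def graph_adj_def path_edges_def by auto

lemma gE: "graph_adj (snd (E_graph n)) i j \<longleftrightarrow>
   (j = i+1 \<and> j < n-1) \<or> (i = j+1 \<and> i < n-1) \<or> (i = 2 \<and> j = n-1) \<or> (j = 2 \<and> i = n-1)"
  unfolding E_graph_def graph_adj_def path_edges_def by auto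

lemma gD_shift: assumes "1 \<le> a" "1 \<le> b" "4 \<le> n"
  shows "graph_adj (snd (D_graph (Suc n))) a b \<longleftrightarrow> graph_adj (snd (D_graph n)) (a-1) (b-1)"
proof -
  obtain a' where a: "a = Suc a'" using assms(1) by (cases a) auto
  obtain b' where b: "b = Suc b'" using assms(2) by (cases b) auto
  obtain n' where n: "n = 4 + n'" using assms(3) le_Suc_ex by blast
  show ?thesis unfolding gD a b n by simp
qed

lemma D_sol:
  assumes "n \<ge> 4"
  shows "\<forall>(S::'a::order set) \<phi>. finite S \<longrightarrow> bij_betw \<phi> S {..<n} \<longrightarrow> adjm S \<phi> (snd (D_graph n)) \<longrightarrow> sol S (inv_into S \<phi> 0) 2 2"
  using assms
proof (induction n rule: nat_induct_at_least)
  case base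
  have e: "{..<4::nat} = set [0,1,2,3]" by auto
  have cond: "\<forall>i\<in>set [0,1,2,3]. \<forall>j\<in>set [0,1,2,3]. graph_adj (snd (D_graph 4)) i j \<longleftrightarrow> graph_adj (set [(0,1),(1,2),(1,3)]) i j"
    unfolding gD by (simp add: graph_adj_def)
  show ?case unfolding e
    by (rule base_check[OF chkD4 _ _ _ cond]) simp_all
next
  case (Suc n)
  show ?case
  proof (intro allI impI)
    fix S :: "'a set" and \<phi>
    assume fin: "finite S" and b: "bij_betw \<phi> S {..<Suc n}" and a: "adjm S \<phi> (snd (D_graph (Suc n)))"
    let ?E = "snd (D_graph (Suc n))"
    have gi: "\<forall>j\<in>{..<Suc n}. graph_adj ?E 0 j \<longleftrightarrow> j = 1" using Suc.hyps by (auto simp: gD)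
    have gk: "\<forall>j\<in>{..<Suc n}. graph_adj ?E 1 j \<longleftrightarrow> j = 0 \<or> j = 2" using Suc.hyps by (auto simp: gD)
    have IH': "\<forall>(S::'a set) \<phi>. finite S \<longrightarrow> bij_betw \<phi> S ({..<Suc n} - {0}) \<longrightarrow> adjm S \<phi> ?E \<longrightarrow> sol S (inv_into S \<phi> 1) 2 2"
    proof (intro allI impI)
      fix S' :: "'a set" and \<phi>'
      assume fin': "finite S'" and b': "bij_betw \<phi>' S' ({..<Suc n} - {0})" and a': "adjm S' \<phi>' ?E"
      define \<psi> where "\<psi> x = \<phi>' x - 1" for x
      have sh: "bij_betw (\<lambda>k. k - 1) ({..<Suc n} - {0}) {..<n}"
      proof (rule bij_betw_byWitness[where f' = Suc])
      qed auto
      have b'': "bij_betw \<psi> S' {..<n}"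
        using bij_betw_trans[OF b' sh] unfolding \<psi>_def by (simp add: o_def)
      have pos: "\<phi>' x \<ge> 1 \<and> \<phi>' x < Suc n" if xS: "x \<in> S'" for x
      proof -
        have "\<phi>' x \<in> {..<Suc n} - {0}" using b' xS unfolding bij_betw_def by blast
        thus ?thesis by auto
      qed
      have a'': "adjm S' \<psi> (snd (D_graph n))"
        unfolding adjm_def
      proof (intro ballI)
        fix x y assume xy: "x \<in> S'" "y \<in> S'"
        have "hasse_adj S' x y \<longleftrightarrow> graph_adj ?E (\<phi>' x) (\<phi>' y)" using a' xy unfolding adjm_def by blast
        also have "\<dots> \<longleftrightarrow> graph_adj (snd (D_graph n)) (\<psi> x) (\<psi> y)"
          using pos[OF xy(1)] pos[OF xy(2)] Suc.hyps gD_shift[of "\<phi>' x" "\<phi>' y" n] unfolding \<psi>_def by simp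
        finally show "hasse_adj S' x y \<longleftrightarrow> graph_adj (snd (D_graph n)) (\<psi> x) (\<psi> y)" .
      qed
      have "sol S' (inv_into S' \<psi> 0) 2 2" using Suc.IH[rule_format, OF fin' b'' a''] .
      moreover have "inv_into S' \<psi> 0 = inv_into S' \<phi>' 1"
      proof -
        have "1 \<in> {..<Suc n} - {0}" using Suc.hyps by auto
        hence x1: "inv_into S' \<phi>' 1 \<in> S'" "\<phi>' (inv_into S' \<phi>' 1) = 1" using b'
          by (auto simp: bij_betw_def inv_into_into f_inv_into_f)
        hence "\<psi> (inv_into S' \<phi>' 1) = 0" unfolding \<psi>_def by simp
        moreover have "inj_on \<psi> S'" using b'' by (simp add: bij_betw_def)
        ultimately show ?thesis using x1 inv_into_f_eq by metis
      qed
      ultimately show "sol S' (inv_into S' \<phi>' 1) 2 2" by simp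
    qed
    have "\<forall>(S::'a set) \<phi>. finite S \<longrightarrow> bij_betw \<phi> S {..<Suc n} \<longrightarrow> adjm S \<phi> ?E \<longrightarrow> sol S (inv_into S \<phi> 0) (2*2 - 2) 2"
      by (rule arm_step[OF _ _ _ _ gi gk IH']) (use Suc.hyps in auto)
    thus "sol S (inv_into S \<phi> 0) 2 2" using fin b a by simp
  qed
qed

lemma D_case:
  assumes "finite S" "n \<ge> 4" "hasse_iso (S::'a::order set) (D_graph n)"
  shows "\<exists>s\<in>S. terminal_point S s \<and> dynkin_point S s"
proof -
  have h: "hasse_iso S (n, snd (D_graph n))" using assms(3) by (simp add: D_graph_def)
  have gi: "\<forall>j<n. graph_adj (snd (D_graph n)) 0 j \<longleftrightarrow> j = 1" using assms(2) by (auto simp: gD)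
  show ?thesis
    by (rule finish[OF assms(1) h _ _ gi D_sol[OF assms(2)]]) (use assms(2) in auto)
qed

lemma arm_step2:
  assumes "i \<in> V" "k \<in> V" "r \<in> V" "k \<noteq> i"
    and "\<forall>j\<in>V. graph_adj E i j \<longleftrightarrow> j = k"
    and "\<forall>j\<in>V. graph_adj E k j \<longleftrightarrow> j = i \<or> j = r"
    and "V - {i} = V'" and "c' = 2*c - \<delta>"
    and IH: "\<forall>(S::'a::order set) \<phi>. finite S \<longrightarrow> bij_betw \<phi> S V' \<longrightarrow> adjm S \<phi> E \<longrightarrow> sol S (inv_into S \<phi> k) c \<delta>"
  shows "\<forall>(S::'a set) \<phi>. finite S \<longrightarrow> bij_betw \<phi> S V \<longrightarrow> adjm S \<phi> E \<longrightarrow> sol S (inv_into S \<phi> i) c' c"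
  using arm_step[OF assms(1-6)] IH assms(7,8) by simp

lemma gE6x: "graph_adj (snd E6_ext) i j \<longleftrightarrow>
   (j = i+1 \<and> j < 5) \<or> (i = j+1 \<and> i < 5) \<or> (i = 2 \<and> j = 5) \<or> (i = 5 \<and> j = 2) \<or> (i = 5 \<and> j = 6) \<or> (i = 6 \<and> j = 5)"
  unfolding E6_ext_def graph_adj_def path_edges_def by auto

lemma gE7x: "graph_adj (snd E7_ext) i j \<longleftrightarrow>
   (j = i+1 \<and> j < 7) \<or> (i = j+1 \<and> i < 7) \<or> (i = 3 \<and> j = 7) \<or> (i = 7 \<and> j = 3)"
  unfolding E7_ext_def graph_adj_def path_edges_def by auto

lemma gE8x: "graph_adj (snd E8_ext) i j \<longleftrightarrow>
   (j = i+1 \<and> j < 8) \<or> (i = j+1 \<and> i < 8) \<or> (i = 2 \<and> j = 8) \<or> (i = 8 \<and> j = 2)"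
  unfolding E8_ext_def graph_adj_def path_edges_def by auto

lemma E6_case:
  fixes S :: "'a::order set"
  assumes fin: "finite S" and h0: "hasse_iso S (E_graph 6)"
  shows "\<exists>s\<in>S. terminal_point S s \<and> dynkin_point S s"
proof -
  have cond: "\<forall>i\<in>set [0,1,2,3,4,5]. \<forall>j\<in>set [0,1,2,3,4,5]. graph_adj (snd (E_graph 6)) i j \<longleftrightarrow> graph_adj (set [(0,1),(1,2),(2,3),(3,4),(2,5)]) i j"
    unfolding gE by (simp add: graph_adj_def)
  have s0: "\<forall>(S::'a set) \<phi>. finite S \<longrightarrow> bij_betw \<phi> S (set [0,1,2,3,4,5]) \<longrightarrow> adjm S \<phi> (snd (E_graph 6)) \<longrightarrow> sol S (inv_into S \<phi> 5) 1 2"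
    by (rule base_check[OF chkE6b _ _ _ cond]) simp_all
  have eV: "{..<6::nat} = set [0,1,2,3,4,5]" by auto
  have s0f: "\<forall>(S::'a set) \<phi>. finite S \<longrightarrow> bij_betw \<phi> S {..<6} \<longrightarrow> adjm S \<phi> (snd (E_graph 6)) \<longrightarrow> sol S (inv_into S \<phi> 5) 1 2"
    using s0 unfolding eV .
  have h: "hasse_iso S (6, snd (E_graph 6))" using h0 by (simp add: E_graph_def)
  have gi: "\<forall>j<6. graph_adj (snd (E_graph 6)) 5 j \<longleftrightarrow> j = 2" by (auto simp: gE)
  show ?thesis by (rule finish[OF fin h _ _ gi s0f]) simp_all
qed

lemma E7_case:
  fixes S :: "'a::order set"
  assumes fin: "finite S" and h0: "hasse_iso S (E_graph 7)"
  shows "\<exists>s\<in>S. terminal_point S s \<and> dynkin_point S s"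
proof -
  have cond: "\<forall>i\<in>set [0,1,2,3,6]. \<forall>j\<in>set [0,1,2,3,6]. graph_adj (snd (E_graph 7)) i j \<longleftrightarrow> graph_adj (set [(0,1),(1,2),(2,3),(2,6)]) i j"
    unfolding gE by (simp add: graph_adj_def)
  have s0: "\<forall>(S::'a set) \<phi>. finite S \<longrightarrow> bij_betw \<phi> S (set [0,1,2,3,6]) \<longrightarrow> adjm S \<phi> (snd (E_graph 7)) \<longrightarrow> sol S (inv_into S \<phi> 3) 4 5"
    by (rule base_check[OF chkE7b _ _ _ cond]) simp_all
  have s1: "\<forall>(S::'a set) \<phi>. finite S \<longrightarrow> bij_betw \<phi> S {0,1,2,3,4,6} \<longrightarrow> adjm S \<phi> (snd (E_graph 7)) \<longrightarrow> sol S (inv_into S \<phi> 4) 3 4"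
    by (rule arm_step2[where r=2, OF _ _ _ _ _ _ _ _ s0]) (auto simp: gE)
  have s2: "\<forall>(S::'a set) \<phi>. finite S \<longrightarrow> bij_betw \<phi> S {..<7} \<longrightarrow> adjm S \<phi> (snd (E_graph 7)) \<longrightarrow> sol S (inv_into S \<phi> 5) 2 3"
    by (rule arm_step2[where r=3, OF _ _ _ _ _ _ _ _ s1]) (auto simp: gE)
  note s2f = s2
  have h: "hasse_iso S (7, snd (E_graph 7))" using h0 by (simp add: E_graph_def)
  have gi: "\<forall>j<7. graph_adj (snd (E_graph 7)) 5 j \<longleftrightarrow> j = 4" by (auto simp: gE)
  show ?thesis by (rule finish[OF fin h _ _ gi s2f]) simp_all
qed

lemma E8_case:
  fixes S :: "'a::order set"
  assumes fin: "finite S" and h0: "hasse_iso S (E_graph 8)"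
  shows "\<exists>s\<in>S. terminal_point S s \<and> dynkin_point S s"
proof -
  have cond: "\<forall>i\<in>set [0,1,2,3,7]. \<forall>j\<in>set [0,1,2,3,7]. graph_adj (snd (E_graph 8)) i j \<longleftrightarrow> graph_adj (set [(0,1),(1,2),(2,3),(2,7)]) i j"
    unfolding gE by (simp add: graph_adj_def)
  have s0: "\<forall>(S::'a set) \<phi>. finite S \<longrightarrow> bij_betw \<phi> S (set [0,1,2,3,7]) \<longrightarrow> adjm S \<phi> (snd (E_graph 8)) \<longrightarrow> sol S (inv_into S \<phi> 3) 4 5"
    by (rule base_check[OF chkE8b _ _ _ cond]) simp_all
  have s1: "\<forall>(S::'a set) \<phi>. finite S \<longrightarrow> bij_betw \<phi> S {0,1,2,3,4,7} \<longrightarrow> adjm S \<phi> (snd (E_graph 8)) \<longrightarrow> sol S (inv_into S \<phi> 4) 3 4"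
    by (rule arm_step2[where r=2, OF _ _ _ _ _ _ _ _ s0]) (auto simp: gE)
  have s2: "\<forall>(S::'a set) \<phi>. finite S \<longrightarrow> bij_betw \<phi> S {0,1,2,3,4,5,7} \<longrightarrow> adjm S \<phi> (snd (E_graph 8)) \<longrightarrow> sol S (inv_into S \<phi> 5) 2 3"
    by (rule arm_step2[where r=3, OF _ _ _ _ _ _ _ _ s1]) (auto simp: gE)
  have s3: "\<forall>(S::'a set) \<phi>. finite S \<longrightarrow> bij_betw \<phi> S {..<8} \<longrightarrow> adjm S \<phi> (snd (E_graph 8)) \<longrightarrow> sol S (inv_into S \<phi> 6) 1 2"
    by (rule arm_step2[where r=4, OF _ _ _ _ _ _ _ _ s2]) (auto simp: gE)
  note s3f = s3
  have h: "hasse_iso S (8, snd (E_graph 8))" using h0 by (simp add: E_graph_def)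
  have gi: "\<forall>j<8. graph_adj (snd (E_graph 8)) 6 j \<longleftrightarrow> j = 5" by (auto simp: gE)
  show ?thesis by (rule finish[OF fin h _ _ gi s3f]) simp_all
qed

lemma E6x_case:
  fixes S :: "'a::order set"
  assumes fin: "finite S" and h0: "hasse_iso S (E6_ext)"
  shows "\<exists>s\<in>S. terminal_point S s \<and> dynkin_point S s"
proof -
  have cond: "\<forall>i\<in>set [0,1,2,3,4,5]. \<forall>j\<in>set [0,1,2,3,4,5]. graph_adj (snd (E6_ext)) i j \<longleftrightarrow> graph_adj (set [(0,1),(1,2),(2,3),(3,4),(2,5)]) i j"
    unfolding gE6x by (simp add: graph_adj_def)
  have s0: "\<forall>(S::'a set) \<phi>. finite S \<longrightarrow> bij_betw \<phi> S (set [0,1,2,3,4,5]) \<longrightarrow> adjm S \<phi> (snd (E6_ext)) \<longrightarrow> sol S (inv_into S \<phi> 5) 1 2"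
    by (rule base_check[OF chkE6b _ _ _ cond]) simp_all
  have s1: "\<forall>(S::'a set) \<phi>. finite S \<longrightarrow> bij_betw \<phi> S {..<7} \<longrightarrow> adjm S \<phi> (snd (E6_ext)) \<longrightarrow> sol S (inv_into S \<phi> 6) 0 1"
    by (rule arm_step2[where r=2, OF _ _ _ _ _ _ _ _ s0]) (auto simp: gE6x)
  note s1f = s1
  have h: "hasse_iso S (7, snd (E6_ext))" using h0 by (simp add: E6_ext_def)
  have gi: "\<forall>j<7. graph_adj (snd (E6_ext)) 6 j \<longleftrightarrow> j = 5" by (auto simp: gE6x)
  show ?thesis by (rule finish[OF fin h _ _ gi s1f]) simp_all
qed

lemma E7x_case:
  fixes S :: "'a::order set"
  assumes fin: "finite S" and h0: "hasse_iso S (E7_ext)"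
  shows "\<exists>s\<in>S. terminal_point S s \<and> dynkin_point S s"
proof -
  have cond: "\<forall>i\<in>set [0,1,2,3,4,7]. \<forall>j\<in>set [0,1,2,3,4,7]. graph_adj (snd (E7_ext)) i j \<longleftrightarrow> graph_adj (set [(0,1),(1,2),(2,3),(3,4),(3,7)]) i j"
    unfolding gE7x by (simp add: graph_adj_def)
  have s0: "\<forall>(S::'a set) \<phi>. finite S \<longrightarrow> bij_betw \<phi> S (set [0,1,2,3,4,7]) \<longrightarrow> adjm S \<phi> (snd (E7_ext)) \<longrightarrow> sol S (inv_into S \<phi> 4) 2 3"
    by (rule base_check[OF chkE7xb _ _ _ cond]) simp_all
  have s1: "\<forall>(S::'a set) \<phi>. finite S \<longrightarrow> bij_betw \<phi> S {0,1,2,3,4,5,7} \<longrightarrow> adjm S \<phi> (snd (E7_ext)) \<longrightarrow> sol S (inv_into S \<phi> 5) 1 2"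
    by (rule arm_step2[where r=3, OF _ _ _ _ _ _ _ _ s0]) (auto simp: gE7x)
  have s2: "\<forall>(S::'a set) \<phi>. finite S \<longrightarrow> bij_betw \<phi> S {..<8} \<longrightarrow> adjm S \<phi> (snd (E7_ext)) \<longrightarrow> sol S (inv_into S \<phi> 6) 0 1"
    by (rule arm_step2[where r=4, OF _ _ _ _ _ _ _ _ s1]) (auto simp: gE7x)
  note s2f = s2
  have h: "hasse_iso S (8, snd (E7_ext))" using h0 by (simp add: E7_ext_def)
  have gi: "\<forall>j<8. graph_adj (snd (E7_ext)) 6 j \<longleftrightarrow> j = 5" by (auto simp: gE7x)
  show ?thesis by (rule finish[OF fin h _ _ gi s2f]) simp_all
qed

lemma E8x_case:
  fixes S :: "'a::order set"
  assumes fin: "finite S" and h0: "hasse_iso S (E8_ext)"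
  shows "\<exists>s\<in>S. terminal_point S s \<and> dynkin_point S s"
proof -
  have cond: "\<forall>i\<in>set [0,1,2,3,8]. \<forall>j\<in>set [0,1,2,3,8]. graph_adj (snd (E8_ext)) i j \<longleftrightarrow> graph_adj (set [(0,1),(1,2),(2,3),(2,8)]) i j"
    unfolding gE8x by (simp add: graph_adj_def)
  have s0: "\<forall>(S::'a set) \<phi>. finite S \<longrightarrow> bij_betw \<phi> S (set [0,1,2,3,8]) \<longrightarrow> adjm S \<phi> (snd (E8_ext)) \<longrightarrow> sol S (inv_into S \<phi> 3) 4 5"
    by (rule base_check[OF chkE8xb _ _ _ cond]) simp_all
  have s1: "\<forall>(S::'a set) \<phi>. finite S \<longrightarrow> bij_betw \<phi> S {0,1,2,3,4,8} \<longrightarrow> adjm S \<phi> (snd (E8_ext)) \<longrightarrow> sol S (inv_into S \<phi> 4) 3 4"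
    by (rule arm_step2[where r=2, OF _ _ _ _ _ _ _ _ s0]) (auto simp: gE8x)
  have s2: "\<forall>(S::'a set) \<phi>. finite S \<longrightarrow> bij_betw \<phi> S {0,1,2,3,4,5,8} \<longrightarrow> adjm S \<phi> (snd (E8_ext)) \<longrightarrow> sol S (inv_into S \<phi> 5) 2 3"
    by (rule arm_step2[where r=3, OF _ _ _ _ _ _ _ _ s1]) (auto simp: gE8x)
  have s3: "\<forall>(S::'a set) \<phi>. finite S \<longrightarrow> bij_betw \<phi> S {0,1,2,3,4,5,6,8} \<longrightarrow> adjm S \<phi> (snd (E8_ext)) \<longrightarrow> sol S (inv_into S \<phi> 6) 1 2"
    by (rule arm_step2[where r=4, OF _ _ _ _ _ _ _ _ s2]) (auto simp: gE8x)
  have s4: "\<forall>(S::'a set) \<phi>. finite S \<longrightarrow> bij_betw \<phi> S {..<9} \<longrightarrow> adjm S \<phi> (snd (E8_ext)) \<longrightarrow> sol S (inv_into S \<phi> 7) 0 1"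
    by (rule arm_step2[where r=5, OF _ _ _ _ _ _ _ _ s3]) (auto simp: gE8x)
  note s4f = s4
  have h: "hasse_iso S (9, snd (E8_ext))" using h0 by (simp add: E8_ext_def)
  have gi: "\<forall>j<9. graph_adj (snd (E8_ext)) 7 j \<longleftrightarrow> j = 6" by (auto simp: gE8x)
  show ?thesis by (rule finish[OF fin h _ _ gi s4f]) simp_all
qed

theorem proposition5:
  fixes S :: "'a::order set"
  assumes "finite S"
    and "(\<exists>n\<ge>4. hasse_iso S (D_graph n)) \<or> (\<exists>n\<in>{6,7,8}. hasse_iso S (E_graph n))
         \<or> hasse_iso S E6_ext \<or> hasse_iso S E7_ext \<or> hasse_iso S E8_ext"
  shows "\<exists>s\<in>S. terminal_point S s \<and> dynkin_point S s"
proof -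
  have D: "\<exists>n\<ge>4. hasse_iso S (D_graph n) \<Longrightarrow> ?thesis" using D_case[OF assms(1)] by blast
  have E: "\<exists>n\<in>{6,7,8}. hasse_iso S (E_graph n) \<Longrightarrow> ?thesis"
    using E6_case[OF assms(1)] E7_case[OF assms(1)] E8_case[OF assms(1)] by auto
  show ?thesis using assms(2) D E E6x_case[OF assms(1)] E7x_case[OF assms(1)] E8x_case[OF assms(1)] by blast
qed

end
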